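(* Let $k\ge2$ be an even integer. Then the polynomial $\sum_{i=0}^ka^ib^{k-i}-\tfrac12(a^k+b^k)\in\mathbb R[a,b]$ is a sum of squares of polynomials. *)

theory Defs
  imports "HOL-Computational_Algebra.Polynomial"
begin

text \<open>Bivariate real polynomials R[a,b] are represented as (R[b])[a], i.e. the type
  real poly poly: the outer indeterminate is a, the inner indeterminate is b.\<close>

definition var_a :: "real poly poly" where
  "var_a = [:0, 1:]"

definition var_b :: "real poly poly" where
  "var_b = [:[:0, 1:]:]"

definition is_sos :: "real poly poly \<Rightarrow> bool" where
  "is_sos p \<longleftrightarrow> (\<exists>qs :: real poly poly list. p = (\<Sum>q\<leftarrow>qs. q ^ 2))"

end

theory Submission
  imports Defs
begin

lemma gen_id:
  fixes x y :: "'a::comm_ring_1"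
  shows "2 * (\<Sum>i=0..2*m. x^i * y^(2*m-i)) - (x^(2*m) + y^(2*m))
         = (\<Sum>j<m. (x^j * y^(m-j) + x^(j+1) * y^(m-j-1))^2)"
proof (induction m)
  case 0
  then show ?case by simp
next
  case (Suc m)
  have S: "(\<Sum>i=0..2*Suc m. x^i * y^(2*Suc m-i))
        = y^2 * (\<Sum>i=0..2*m. x^i * y^(2*m-i)) + x^(2*m+1)*y + x^(2*m+2)"
  proof -
    have "(\<Sum>i=0..2*Suc m. x^i * y^(2*Suc m-i)) = (\<Sum>i=0..2*m. x^i * y^(2*Suc m-i)) + x^(2*m+1)*y + x^(2*m+2)"
      by (simp add: numeral_2_eq_2)
    moreover have "(\<Sum>i=0..2*m. x^i * y^(2*Suc m-i)) = y^2 * (\<Sum>i=0..2*m. x^i * y^(2*m-i))"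
      unfolding sum_distrib_left
      by (rule sum.cong) (auto simp: Suc_diff_le power_Suc power2_eq_square algebra_simps numeral_2_eq_2)
    ultimately show ?thesis by simp
  qed
  have R: "(\<Sum>j<Suc m. (x^j * y^(Suc m-j) + x^(j+1) * y^(Suc m-j-1))^2)
        = y^2 * (\<Sum>j<m. (x^j * y^(m-j) + x^(j+1) * y^(m-j-1))^2) + (x^m*y + x^(m+1))^2"
  proof -
    have "(\<Sum>j<m. (x^j * y^(Suc m-j) + x^(j+1) * y^(Suc m-j-1))^2)
         = y^2 * (\<Sum>j<m. (x^j * y^(m-j) + x^(j+1) * y^(m-j-1))^2)"
      unfolding sum_distrib_left
    proof (rule sum.cong)
      fix j assume "j \<in> {..<m}"
      then have j: "j < m" by simp
      have "x^j * y^(Suc m-j) + x^(j+1) * y^(Suc m-j-1) = y * (x^j * y^(m-j) + x^(j+1) * y^(m-j-1))"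
      proof -
        have e: "y^(m-j) = y * y^(m - Suc j)" using j by (metis Suc_diff_Suc power_Suc)
        show ?thesis using j by (simp add: Suc_diff_le algebra_simps Suc_diff_Suc e)
      qed
      then show "(x^j * y^(Suc m-j) + x^(j+1) * y^(Suc m-j-1))^2 = y^2 * (x^j * y^(m-j) + x^(j+1) * y^(m-j-1))^2"
        by (simp add: power_mult_distrib)
    qed simp
    then show ?thesis by simp
  qed
  show ?case
    unfolding S R Suc.IH[symmetric]
    by (simp add: power2_eq_square algebra_simps power_add numeral_2_eq_2)
qed

theorem mainTheorem16:
  fixes k :: nat
  assumes "k \<ge> 2" and "even k"
  shows "is_sos ((\<Sum>i=0..k. var_a ^ i * var_b ^ (k - i))
                 - [:[:1/2:]:] * (var_a ^ k + var_b ^ k))"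
proof -
  obtain m where k: "k = 2*m" using assms(2) by blast
  define c :: "real poly poly" where "c = [:[:sqrt (1/2):]:]"
  define h :: "real poly poly" where "h = [:[:1/2:]:]"
  have c2: "c^2 = h" unfolding c_def h_def by (simp add: power2_eq_square)
  have h2: "h * 2 = 1"
  proof -
    have "h * 2 = h + h" by (simp add: mult_2_right)
    also have "\<dots> = 1" unfolding h_def by (simp add: one_pCons)
    finally show ?thesis .
  qed
  let ?S = "\<Sum>i=0..k. var_a ^ i * var_b ^ (k - i)"
  let ?T = "\<lambda>j. var_a^j * var_b^(m-j) + var_a^(j+1) * var_b^(m-j-1)"
  have G: "2 * ?S - (var_a^k + var_b^k) = (\<Sum>j<m. (?T j)^2)"
    unfolding k by (rule gen_id)
  have "?S - h * (var_a^k + var_b^k) = h * (2 * ?S - (var_a^k + var_b^k))"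
    using h2 by (simp add: algebra_simps)
  also have "\<dots> = (\<Sum>j<m. (c * ?T j)^2)"
    by (subst G) (simp only: sum_distrib_left power_mult_distrib c2)
  also have "\<dots> = (\<Sum>q\<leftarrow>map (\<lambda>j. c * ?T j) [0..<m]. q^2)"
    by (simp add: sum_list_sum_nth atLeast0LessThan[symmetric] comp_def)
  finally show ?thesis unfolding is_sos_def h_def by blast
qed

end
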